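(* Let $H$ be a finite abelian group of order $n$, and for $f:H\to\{0,1\}$ define the multispectrum $A_f:H^{n-1}\to\mathbb{Z}$ by $$A_f(\ell_1,\dots,\ell_{n-1})=\sum_{k\in H}f(k)f(k+\ell_1)\cdots f(k+\ell_1+\cdots+\ell_{n-1}).$$ If $f_1,f_2:H\to\{0,1\}$ satisfy $A_{f_1}=A_{f_2}$, then $f_1$ is a shift of $f_2$, i.e. there is $\ell\in H$ with $f_1(k)=f_2(k+\ell)$ for all $k\in H$. *)

theory Defs
  imports Main
begin

text \<open>An argument (l_1,...,l_{n-1}) \<in> H^{n-1} is a list ls of length n-1;
  the j-th factor (j = 0..n-1) is f(k + l_1 + ... + l_j) = f(k + sum_list (take j ls)).\<close>
definition multispectrum :: "('a::{finite,ab_group_add} \<Rightarrow> int) \<Rightarrow> 'a list \<Rightarrow> int" where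
  "multispectrum f ls = (\<Sum>k\<in>UNIV. \<Prod>j\<in>{0..length ls}. f (k + sum_list (take j ls)))"

end

theory Submission
  imports Defs
begin

lemma prod01:
  assumes "finite A" "\<And>j. j \<in> A \<Longrightarrow> h j \<in> {0, 1::int}"
  shows "prod h A = (if \<forall>j\<in>A. h j = 1 then 1 else 0)"
  using assms by (induction A rule: finite_induct) auto

lemma tele:
  assumes "j \<le> m"
  shows "sum_list (take j (map (\<lambda>i. g (Suc i) - g i) [0..<m])) = g j - (g 0 :: 'a::ab_group_add)"
proof -
  have "take j (map (\<lambda>i. g (Suc i) - g i) [0..<m]) = map (\<lambda>i. g (Suc i) - g i) [0..<j]"
    using assms by (simp add: take_map)
  then show ?thesis
    by (simp add: sum_list_map_eq_sum_count sum_set_upt_conv_sum_list_nat[symmetric]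
        atLeast0LessThan sum_lessThan_telescope)
qed

lemma ms_pos:
  fixes f :: "'a::{finite,ab_group_add} \<Rightarrow> int"
  assumes "\<And>k. f k \<in> {0, 1}"
  shows "multispectrum f ls > 0 \<longleftrightarrow> (\<exists>k. \<forall>j\<in>{0..length ls}. f (k + sum_list (take j ls)) = 1)"
proof -
  have t: "\<And>k. (\<Prod>j\<in>{0..length ls}. f (k + sum_list (take j ls))) =
     (if \<forall>j\<in>{0..length ls}. f (k + sum_list (take j ls)) = 1 then 1 else 0)"
    by (rule prod01) (use assms in auto)
  show ?thesis
  proof
    assume "multispectrum f ls > 0"
    show "\<exists>k. \<forall>j\<in>{0..length ls}. f (k + sum_list (take j ls)) = 1"
    proof (rule ccontr)
      assume "\<not> ?thesis"
      then have "multispectrum f ls = 0" unfolding multispectrum_def t by (auto intro: sum.neutral)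
      then show False using \<open>multispectrum f ls > 0\<close> by simp
    qed
  next
    assume "\<exists>k. \<forall>j\<in>{0..length ls}. f (k + sum_list (take j ls)) = 1"
    then obtain k where k: "\<forall>j\<in>{0..length ls}. f (k + sum_list (take j ls)) = 1" by blast
    have "(\<Prod>j\<in>{0..length ls}. f (k + sum_list (take j ls))) \<le> multispectrum f ls"
      unfolding multispectrum_def
      by (rule member_le_sum) (auto simp: t)
    then show "multispectrum f ls > 0" using k t by auto
  qed
qed

lemma ms_zero:
  fixes f :: "'a::{finite,ab_group_add} \<Rightarrow> int"
  assumes "\<And>k. f k \<in> {0, 1}"
  shows "multispectrum f (replicate m 0) = sum f UNIV"
proof -
  have "\<And>k. (\<Prod>j\<in>{0..m}. f (k + sum_list (take j (replicate m 0)))) = f k"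
  proof -
    fix k
    have "(\<Prod>j\<in>{0..m}. f (k + sum_list (take j (replicate m (0::'a))))) = (\<Prod>j\<in>{0..m}. f k)"
      proof (rule prod.cong)
      fix j
      have "\<And>i. sum_list (replicate i (0::'a)) = 0" by (induct_tac i) auto
      then show "f (k + sum_list (take j (replicate m (0::'a)))) = f k" by (simp add: take_replicate)
    qed simp
    also have "\<dots> = f k ^ (Suc m)" by simp
    also have "\<dots> = f k" using assms[of k] by auto
    finally show "(\<Prod>j\<in>{0..m}. f (k + sum_list (take j (replicate m 0)))) = f k" .
  qed
  then show ?thesis unfolding multispectrum_def by simp
qed

theorem lemma7:
  fixes f1 f2 :: "'a::{finite,ab_group_add} \<Rightarrow> int"
  assumes "\<And>k. f1 k \<in> {0, 1}"
      and "\<And>k. f2 k \<in> {0, 1}"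
      and "\<And>ls. length ls = card (UNIV :: 'a set) - 1 \<Longrightarrow> multispectrum f1 ls = multispectrum f2 ls"
  shows "\<exists>l. \<forall>k. f1 k = f2 (k + l)"
proof -
  define n where "n = card (UNIV :: 'a set)"
  have n1: "n \<ge> 1" unfolding n_def by (simp add: Suc_leI finite_UNIV_card_ge_0)
  have sums: "sum f1 UNIV = sum f2 UNIV"
    using assms(3)[of "replicate (n - 1) 0"] ms_zero[of f1, OF assms(1)] ms_zero[of f2, OF assms(2)]
    by (simp add: n_def)
  obtain c where c: "\<And>x. f1 x \<le> f2 (x + c)"
  proof (cases "\<exists>s. f1 s = 1")
    case False
    then have "\<And>x. f1 x \<le> f2 (x + 0)" using assms(1,2) by (metis insert_iff order_refl singletonD zero_less_one order_less_imp_le)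
    then show ?thesis using that by blast
  next
    case True
    then obtain s where s: "f1 s = 1" by blast
    obtain e where e: "bij_betw e {0..<n} (UNIV :: 'a set)"
      unfolding n_def using ex_bij_betw_nat_finite[of "UNIV :: 'a set"] by auto
    define g where "g j = (if f1 (e j) = 1 then e j - s else 0)" for j
    define ls where "ls = map (\<lambda>i. g (Suc i) - g i) [0..<n-1]"
    have len: "length ls = n - 1" by (simp add: ls_def)
    have pts: "\<And>j. j \<in> {0..length ls} \<Longrightarrow> sum_list (take j ls) = g j - g 0"
      unfolding ls_def by (rule tele) simp
    have "\<exists>k. \<forall>j\<in>{0..length ls}. f1 (k + sum_list (take j ls)) = 1"
    proof (intro exI ballI)
      fix j assume "j \<in> {0..length ls}"
      then have "s + g 0 + sum_list (take j ls) = s + g j"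
        using pts by (simp add: algebra_simps)
      then show "f1 (s + g 0 + sum_list (take j ls)) = 1"
        using s by (simp only:) (simp add: g_def)
    qed
    then have "multispectrum f1 ls > 0" using ms_pos[of f1, OF assms(1)] by blast
    then have "multispectrum f2 ls > 0" using assms(3) len n_def by simp
    then obtain k where k: "\<forall>j\<in>{0..length ls}. f2 (k + sum_list (take j ls)) = 1"
      using ms_pos[of f2, OF assms(2)] by blast
    have "\<And>x. f1 x \<le> f2 (x + (k - g 0 - s))"
    proof -
      fix x
      show "f1 x \<le> f2 (x + (k - g 0 - s))"
      proof (cases "f1 x = 1")
        case False
        then have "f1 x = 0" using assms(1)[of x] by auto
        then show ?thesis using assms(2)[of "x + (k - g 0 - s)"] by auto
      next
        case True
        have "x \<in> e ` {0..<n}" using e unfolding bij_betw_def by simp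
        then obtain j where j: "j < n" "e j = x" by auto
        have jj: "j \<in> {0..length ls}" using j n1 len by auto
        have "g j = x - s" using True j by (simp add: g_def)
        then have "k + sum_list (take j ls) = x + (k - g 0 - s)"
          using pts[OF jj] by (simp add: algebra_simps)
        moreover have "f2 (k + sum_list (take j ls)) = 1" using k jj by blast
        ultimately have "f2 (x + (k - g 0 - s)) = 1" by metis
        then show ?thesis using True by simp
      qed
    qed
    then show ?thesis using that by blast
  qed
  have re: "(\<Sum>x\<in>UNIV. f2 (x + c)) = sum f2 UNIV"
    by (rule sum.reindex_bij_witness[of _ "\<lambda>x. x - c" "\<lambda>x. x + c"]) auto
  have "(\<Sum>x\<in>UNIV. f2 (x + c) - f1 x) = 0"
    using re sums by (simp add: sum_subtractf)
  then have "\<forall>x\<in>UNIV. f2 (x + c) - f1 x = 0"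
    by (subst sum_nonneg_eq_0_iff[symmetric]) (use c in auto)
  then show ?thesis by (intro exI[of _ c]) auto
qed

end
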